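(* There exists an absolute constant $C>0$ (one can take $C=40$) such that the following holds. Let $k\ge2$, $n>0$, $\lambda>0$, $\alpha\in(0,1]$, and let $\mathbf{p}$ be a distribution on $[k]$. Let $N\sim\mathbf{Poi}(n)$ and, given $N$, let $x_1,\dots,x_N$ be i.i.d. from $\mathbf{p}$. Each user $i$ outputs, for each $j\in[k]$, the message $(j,\mathbf{1}\{x_i=j\})$ together with $s_{i,j}\sim\mathbf{Poi}(\lambda/N)$ additional messages $(j,b)$ where each $b\sim\mathrm{Bernoulli}(1/2)$, all randomness independent. Let $N_j$ be the total number of messages equal to $(j,1)$, $\mu=\frac nk+\frac\lambda2$, $Z=\frac kn\sum_{j=1}^k\big((N_j-\mu)^2-N_j\big)$, and $\tau=2n\alpha^2$. If $n\ge C\cdot\frac{k^{3/4}\mu^{1/2}}{\alpha}$, then $\Pr[Z\ge\tau]\le\frac13$ when $\mathbf{p}=\mathbf{U}$, and $\Pr[Z\le\tau]\le\frac13$ when $d_{TV}(\mathbf{p},\mathbf{U})>\alpha$.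
   Context: $\mathbf{U}$ is the uniform distribution on $[k]=\{1,\dots,k\}$ and $d_{TV}(\mathbf{p},\mathbf{q})=\frac12\|\mathbf{p}-\mathbf{q}\|_1$. *)

theory Defs
  imports "HOL-Probability.Probability" "HOL-Library.Multiset"
begin

fun msum_pmf :: "'a multiset pmf list \<Rightarrow> 'a multiset pmf" where
  "msum_pmf [] = return_pmf {#}"
| "msum_pmf (D # Ds) = do { A \<leftarrow> D; B \<leftarrow> msum_pmf Ds; return_pmf (A + B) }"

definition coord_msgs :: "real \<Rightarrow> nat \<Rightarrow> nat \<Rightarrow> nat \<Rightarrow> (nat \<times> bool) multiset pmf" where
  "coord_msgs lam N j x = do {
     s \<leftarrow> poisson_pmf (lam / real N);
     bs \<leftarrow> replicate_pmf s (bernoulli_pmf (1/2));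
     return_pmf ({#(j, x = j)#} + mset (map (\<lambda>b. (j, b)) bs)) }"

definition user_msgs :: "nat \<Rightarrow> real \<Rightarrow> nat \<Rightarrow> nat pmf \<Rightarrow> (nat \<times> bool) multiset pmf" where
  "user_msgs k lam N p = do {
     x \<leftarrow> p;
     msum_pmf (map (\<lambda>j. coord_msgs lam N j x) [1..<k+1]) }"

definition protocol :: "nat \<Rightarrow> real \<Rightarrow> real \<Rightarrow> nat pmf \<Rightarrow> (nat \<times> bool) multiset pmf" where
  "protocol k n lam p = do {
     N \<leftarrow> poisson_pmf n;
     msum_pmf (replicate N (user_msgs k lam N p)) }"

definition Nj :: "(nat \<times> bool) multiset \<Rightarrow> nat \<Rightarrow> nat" where
  "Nj M j = count M (j, True)"

definition mu :: "nat \<Rightarrow> real \<Rightarrow> real \<Rightarrow> real" where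
  "mu k n lam = n / real k + lam / 2"

definition Zstat :: "nat \<Rightarrow> real \<Rightarrow> real \<Rightarrow> (nat \<times> bool) multiset \<Rightarrow> real" where
  "Zstat k n lam M = (real k / n) * (\<Sum>j = 1..k. (real (Nj M j) - mu k n lam)^2 - real (Nj M j))"

definition unif :: "nat \<Rightarrow> nat pmf" where
  "unif k = pmf_of_set {1..k}"

definition dTV :: "nat \<Rightarrow> nat pmf \<Rightarrow> nat pmf \<Rightarrow> real" where
  "dTV k p q = (1/2) * (\<Sum>j = 1..k. \<bar>pmf p j - pmf q j\<bar>)"

end

theory Submission
  imports Defs
begin


definition poi :: "real \<Rightarrow> nat pmf" where
  "poi r = (if r \<le> 0 then return_pmf 0 else poisson_pmf r)"

lemma pmf_poi: "0 \<le> r \<Longrightarrow> pmf (poi r) x = r ^ x / fact x * exp (- r)"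
  by (cases "r = 0") (auto simp: poi_def indicator_def)

lemma poi_0: "poi 0 = return_pmf 0"
  by (simp add: poi_def)

lemma nat_pmf_sums_expect:
  fixes M :: "nat pmf" and g :: "nat \<Rightarrow> real"
  assumes s: "(\<lambda>x. pmf M x * g x) sums s" and g: "\<And>x. g x \<ge> 0"
  shows "integrable M g" "measure_pmf.expectation M g = s"
proof -
  have i: "integrable (count_space UNIV) (\<lambda>x. pmf M x * g x)"
    using s g unfolding integrable_count_space_nat_iff
    by (simp add: sums_iff abs_mult pmf_nonneg)
  then show "integrable M g"
    unfolding measure_pmf_eq_density by (subst integrable_density) auto
  have "measure_pmf.expectation M g = (\<integral>n. pmf M n * g n \<partial>count_space UNIV)"
    unfolding measure_pmf_eq_density by (subst integral_density) auto
  also have "\<dots> = s" using i s by (subst integral_count_space_nat) (simp_all add: sums_iff)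
  finally show "measure_pmf.expectation M g = s" .
qed

lemma poi_add:
  assumes "0 \<le> a" "0 \<le> b"
  shows "map_pmf (\<lambda>(x,y). x + y) (pair_pmf (poi a) (poi b)) = poi (a + b)"
proof (rule pmf_eqI)
  fix m :: nat
  have eq: "map_pmf (\<lambda>(x,y). x + y) (pair_pmf (poi a) (poi b)) = bind_pmf (poi a) (\<lambda>x. map_pmf (\<lambda>y. x + y) (poi b))"
    unfolding pair_pmf_def map_pmf_def by (simp add: bind_assoc_pmf bind_return_pmf)
  have pm: "pmf (map_pmf (\<lambda>y. x + y) (poi b)) m = (if x \<le> m then pmf (poi b) (m - x) else 0)" for x
  proof -
    have "(\<lambda>y. x + y) -` {m} = (if x \<le> m then {m - x} else {})" by auto
    then show ?thesis by (simp add: pmf_map measure_pmf_single)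
  qed
  have "pmf (map_pmf (\<lambda>(x,y). x + y) (pair_pmf (poi a) (poi b))) m
      = (\<Sum>x\<in>{..m}. (if x \<le> m then pmf (poi b) (m - x) else 0) * pmf (poi a) x)"
    unfolding eq pmf_bind pm
    by (rule integral_measure_pmf_real) (auto split: if_splits)
  also have "\<dots> = (\<Sum>x\<le>m. (real (m choose x) * a ^ x * b ^ (m - x))) / fact m * exp (- (a + b))"
    unfolding sum_divide_distrib sum_distrib_right
  proof (rule sum.cong[OF refl])
    fix x assume x: "x \<in> {..m}"
    then have "real (fact m) = real (fact x * fact (m - x) * (m choose x))"
      using binomial_fact_lemma[of x m] by simp
    then have "fact m = (fact x * fact (m - x) :: real) * real (m choose x)"
      by (simp only: of_nat_mult of_nat_fact)
    then show "(if x \<le> m then pmf (poi b) (m - x) else 0) * pmf (poi a) x =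
      real (m choose x) * a ^ x * b ^ (m - x) / fact m * exp (- (a + b))"
      using x assms by (simp add: pmf_poi exp_add[symmetric] exp_minus field_simps)
  qed
  also have "\<dots> = pmf (poi (a + b)) m"
    using assms by (simp add: pmf_poi binomial_ring add.commute)
  finally show "pmf (map_pmf (\<lambda>(x,y). x + y) (pair_pmf (poi a) (poi b))) m = pmf (poi (a + b)) m" .
qed

lemma fact_split_real:
  assumes "x \<le> m"
  shows "(fact m :: real) = fact x * fact (m - x) * real (m choose x)"
proof -
  have "real (fact m) = real (fact x * fact (m - x) * (m choose x))"
    using binomial_fact_lemma[of x m] assms by simp
  then show ?thesis by (simp only: of_nat_mult of_nat_fact)
qed

lemma poi_thin:
  assumes r: "0 \<le> r"
  shows "bind_pmf (poi r) (\<lambda>s. binomial_pmf s (1/2)) = poi (r / 2)"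
proof (rule pmf_eqI)
  fix c :: nat
  define f where "f = (\<lambda>s. pmf (poi r) s * (real (s choose c) * (1/2) ^ c * (1/2) ^ (s - c)))"
  have f0: "f i = 0" if "i < c" for i using that by (simp add: f_def)
  have fs: "f (m + c) = exp (- r) * (r/2) ^ c / fact c * ((r/2) ^ m /\<^sub>R fact m)" for m
  proof -
    have "(fact (m + c) :: real) = fact c * fact m * real ((m + c) choose c)"
      using fact_split_real[of c "m + c"] by simp
    then show ?thesis using r
      by (simp add: f_def pmf_poi power_add field_simps)
  qed
  have "(\<lambda>m. f (m + c)) sums (exp (- r) * (r/2) ^ c / fact c * exp (r / 2))"
    unfolding fs by (rule sums_mult[OF exp_converges])
  then have "f sums (exp (- r) * (r/2) ^ c / fact c * exp (r / 2))"
    by (subst (asm) sums_iff_shift) (simp add: f0)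
  moreover have "exp (- r) * (r/2) ^ c / fact c * exp (r / 2) = pmf (poi (r/2)) c"
    using r by (simp add: pmf_poi field_simps exp_add[symmetric])
  ultimately have S: "f sums pmf (poi (r/2)) c" by simp
  have "pmf (bind_pmf (poi r) (\<lambda>s. binomial_pmf s (1/2))) c
      = measure_pmf.expectation (poi r) (\<lambda>s. real (s choose c) * (1/2) ^ c * (1/2) ^ (s - c))"
    by (simp add: pmf_bind)
  also have "\<dots> = pmf (poi (r/2)) c"
    by (rule nat_pmf_sums_expect(2)) (use S in \<open>auto simp: f_def\<close>)
  finally show "pmf (bind_pmf (poi r) (\<lambda>s. binomial_pmf s (1/2))) c = pmf (poi (r/2)) c" .
qed

definition ffr :: "nat \<Rightarrow> nat \<Rightarrow> real" where
  "ffr q x = (\<Prod>i<q. (real x - real i))"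

lemma ffr_fact: "ffr q (m + q) * fact m = fact (m + q)"
proof (induction q arbitrary: m)
  case 0 then show ?case by (simp add: ffr_def)
next
  case (Suc q)
  have "ffr (Suc q) (m + Suc q) = ffr q (Suc m + q) * real (Suc m)"
    by (simp add: ffr_def)
  then have "ffr (Suc q) (m + Suc q) * fact m = ffr q (Suc m + q) * fact (Suc m)"
    by (simp add: algebra_simps)
  also have "\<dots> = fact (Suc m + q)" by (rule Suc.IH)
  finally show ?case by simp
qed

lemma ffr_0: "x < q \<Longrightarrow> ffr q x = 0"
  unfolding ffr_def by (rule prod_zero) auto

lemma ffr_nonneg: "ffr q x \<ge> 0"
proof (cases "x < q")
  case True then show ?thesis by (simp add: ffr_0)
next
  case False then show ?thesis unfolding ffr_def by (intro prod_nonneg) auto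
qed

lemma poi_ffr:
  assumes r: "0 \<le> r"
  shows "integrable (poi r) (ffr q)" "measure_pmf.expectation (poi r) (ffr q) = r ^ q"
proof -
  define f where "f = (\<lambda>x. pmf (poi r) x * ffr q x)"
  have f0: "f i = 0" if "i < q" for i using that by (simp add: f_def ffr_0)
  have fs: "f (m + q) = exp (- r) * r ^ q * (r ^ m /\<^sub>R fact m)" for m
  proof -
    have "ffr q (m + q) = fact (m + q) / fact m" using ffr_fact[of q m]
      by (simp add: field_simps)
    then show ?thesis using r by (simp add: f_def pmf_poi power_add field_simps)
  qed
  have "(\<lambda>m. f (m + q)) sums (exp (- r) * r ^ q * exp r)"
    unfolding fs by (rule sums_mult[OF exp_converges])
  then have "f sums (exp (- r) * r ^ q * exp r)"
    by (subst (asm) sums_iff_shift) (simp add: f0)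
  moreover have "exp (- r) * r ^ q * exp r = r ^ q"
    by (simp add: exp_minus field_simps)
  ultimately have S: "f sums r ^ q" by simp
  show "integrable (poi r) (ffr q)" "measure_pmf.expectation (poi r) (ffr q) = r ^ q"
    using nat_pmf_sums_expect[OF S[unfolded f_def] ffr_nonneg] by auto
qed

lemma ffr_expand:
  "ffr 1 x = real x" "ffr (Suc 0) x = real x" "ffr 2 x = real x * (real x - 1)"
  "ffr 3 x = real x * (real x - 1) * (real x - 2)"
  "ffr 4 x = real x * (real x - 1) * (real x - 2) * (real x - 3)"
  by (simp_all add: ffr_def numeral_eq_Suc lessThan_Suc)

lemma poi_poly:
  assumes r: "0 \<le> r"
  shows "integrable (poi r) (\<lambda>x. a0 + a1 * real x + a2 * real x ^ 2 + a3 * real x ^ 3 + a4 * real x ^ 4)"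
        "measure_pmf.expectation (poi r) (\<lambda>x. a0 + a1 * real x + a2 * real x ^ 2 + a3 * real x ^ 3 + a4 * real x ^ 4)
          = a0 + a1 * r + a2 * (r^2 + r) + a3 * (r^3 + 3*r^2 + r) + a4 * (r^4 + 6*r^3 + 7*r^2 + r)"
proof -
  have eq: "(\<lambda>x. a0 + a1 * real x + a2 * real x ^ 2 + a3 * real x ^ 3 + a4 * real x ^ 4) =
    (\<lambda>x. a0 + (a1 + a2 + a3 + a4) * ffr 1 x + (a2 + 3 * a3 + 7 * a4) * ffr 2 x + (a3 + 6 * a4) * ffr 3 x + a4 * ffr 4 x)"
    by (rule ext) (simp add: ffr_expand algebra_simps power2_eq_square power3_eq_cube power4_eq_xxxx)
  note I = poi_ffr[OF r]
  show "integrable (poi r) (\<lambda>x. a0 + a1 * real x + a2 * real x ^ 2 + a3 * real x ^ 3 + a4 * real x ^ 4)"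
    unfolding eq using I by simp
  show "measure_pmf.expectation (poi r) (\<lambda>x. a0 + a1 * real x + a2 * real x ^ 2 + a3 * real x ^ 3 + a4 * real x ^ 4)
          = a0 + a1 * r + a2 * (r^2 + r) + a3 * (r^3 + 3*r^2 + r) + a4 * (r^4 + 6*r^3 + 7*r^2 + r)"
    unfolding eq
    by (simp add: I integrable_add integrable_mult_right Bochner_Integration.integral_add algebra_simps
        power2_eq_square power3_eq_cube power4_eq_xxxx)
qed


definition vadd :: "(nat \<Rightarrow> nat) \<Rightarrow> (nat \<Rightarrow> nat) \<Rightarrow> nat \<Rightarrow> nat" where
  "vadd a b = (\<lambda>i. a i + b i)"
abbreviation vadd2 :: "(nat \<Rightarrow> nat) \<times> (nat \<Rightarrow> nat) \<Rightarrow> nat \<Rightarrow> nat" where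
  "vadd2 \<equiv> (\<lambda>(a, b). vadd a b)"
lemma map_vadd2_pair: "map_pmf vadd2 (pair_pmf X Y) = bind_pmf X (\<lambda>a. bind_pmf Y (\<lambda>b. return_pmf (vadd a b)))"
  unfolding pair_pmf_def map_pmf_def by (simp add: bind_assoc_pmf bind_return_pmf)
lemma Pi_supp: "finite A \<Longrightarrow> f \<in> set_pmf (Pi_pmf A d P) \<Longrightarrow> x \<notin> A \<Longrightarrow> f x = d"
  using set_Pi_pmf_subset[of A d P] by blast

lemma Pi_add:
  assumes A: "finite A"
  shows "map_pmf vadd2 (pair_pmf (Pi_pmf A 0 P) (Pi_pmf A 0 Q)) =
         Pi_pmf A 0 (\<lambda>i. map_pmf (\<lambda>(x,y). x + y) (pair_pmf (P i) (Q i)))"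
proof -
  have "Pi_pmf A 0 (\<lambda>i. map_pmf (\<lambda>(x,y). x + y) (pair_pmf (P i) (Q i)))
      = Pi_pmf A 0 (\<lambda>i. bind_pmf (P i) (\<lambda>x. bind_pmf (Q i) (\<lambda>y. return_pmf (x + y))))"
    unfolding pair_pmf_def map_pmf_def by (simp add: bind_assoc_pmf bind_return_pmf)
  also have "\<dots> = bind_pmf (Pi_pmf A 0 P) (\<lambda>f. Pi_pmf A 0 (\<lambda>i. bind_pmf (Q i) (\<lambda>y. return_pmf (f i + y))))"
    by (rule Pi_pmf_bind[OF A])
  also have "\<dots> = bind_pmf (Pi_pmf A 0 P) (\<lambda>f. bind_pmf (Pi_pmf A 0 Q) (\<lambda>g. Pi_pmf A 0 (\<lambda>i. return_pmf (f i + g i))))"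
  proof (rule bind_pmf_cong[OF refl])
    fix f :: "nat \<Rightarrow> nat"
    show "Pi_pmf A 0 (\<lambda>i. bind_pmf (Q i) (\<lambda>y. return_pmf (f i + y))) = bind_pmf (Pi_pmf A 0 Q) (\<lambda>g. Pi_pmf A 0 (\<lambda>i. return_pmf (f i + g i)))"
      by (rule Pi_pmf_bind[OF A])
  qed
  also have "\<dots> = bind_pmf (Pi_pmf A 0 P) (\<lambda>f. bind_pmf (Pi_pmf A 0 Q) (\<lambda>g. return_pmf (vadd f g)))"
  proof (rule bind_pmf_cong[OF refl], rule bind_pmf_cong[OF refl])
    fix f g assume f: "f \<in> set_pmf (Pi_pmf A 0 P)" and g: "g \<in> set_pmf (Pi_pmf A 0 Q)"
    have "\<And>x. x \<notin> A \<Longrightarrow> f x = 0" "\<And>x. x \<notin> A \<Longrightarrow> g x = 0"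
      using Pi_supp[OF A f] Pi_supp[OF A g] by auto
    then show "Pi_pmf A 0 (\<lambda>i. return_pmf (f i + g i)) = return_pmf (vadd f g)"
      using A by (auto simp: vadd_def fun_eq_iff)
  qed
  finally show ?thesis by (simp add: map_vadd2_pair)
qed


lemma vadd_0 [simp]: "vadd (\<lambda>_. 0) b = b" "vadd b (\<lambda>_. 0) = b"
  by (auto simp: vadd_def)

fun vsum_pmf :: "(nat \<Rightarrow> nat) pmf list \<Rightarrow> (nat \<Rightarrow> nat) pmf" where
  "vsum_pmf [] = return_pmf (\<lambda>_. 0)"
| "vsum_pmf (D # Ds) = do { a \<leftarrow> D; b \<leftarrow> vsum_pmf Ds; return_pmf (vadd a b) }"

definition cnt :: "nat \<Rightarrow> (nat \<times> bool) multiset \<Rightarrow> nat \<Rightarrow> nat" where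
  "cnt k M = (\<lambda>j. if j \<in> {1..k} then count M (j, True) else 0)"

lemma cnt_add: "cnt k (A + B) = vadd (cnt k A) (cnt k B)"
  by (auto simp: cnt_def vadd_def)

lemma cnt_empty: "cnt k {#} = (\<lambda>_. 0)"
  by (auto simp: cnt_def)

lemma map_cnt_msum: "map_pmf (cnt k) (msum_pmf Ds) = vsum_pmf (map (map_pmf (cnt k)) Ds)"
proof (induction Ds)
  case Nil then show ?case by (simp add: cnt_empty)
next
  case (Cons a Ds)
  show ?case by (simp add: cnt_add map_bind_pmf bind_map_pmf Cons.IH[symmetric])
qed

definition sgl :: "nat \<Rightarrow> nat \<Rightarrow> nat \<Rightarrow> nat" where
  "sgl j c = (\<lambda>i. if i = j then c else 0)"

lemma cnt_coord:
  assumes "j \<in> {1..k}"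
  shows "cnt k ({#(j, x = j)#} + mset (map (\<lambda>b. (j, b)) bs)) = sgl j (of_bool (x = j) + length (filter id bs))"
proof -
  have "count (mset (map (Pair j) bs)) (i, True) = (if i = j then length (filter id bs) else 0)" for i
    by (induction bs) (auto simp: id_def)
  then show ?thesis using assms by (auto simp: cnt_def sgl_def fun_eq_iff id_def)
qed

lemma map_cnt_coord:
  assumes j: "j \<in> {1..k}" and N: "N > 0" and lam: "lam > 0"
  shows "map_pmf (cnt k) (coord_msgs lam N j x) = map_pmf (\<lambda>c. sgl j (of_bool (x = j) + c)) (poi (lam / real N / 2))"
proof -
  have pp: "poisson_pmf (lam / real N) = poi (lam / real N)"
  proof -
    have "lam / real N > 0" using N lam by simp
    then show ?thesis by (simp add: poi_def)
  qed
  have "map_pmf (cnt k) (coord_msgs lam N j x)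
     = bind_pmf (poi (lam / real N)) (\<lambda>s. map_pmf (\<lambda>c. sgl j (of_bool (x = j) + c))
          (map_pmf (length \<circ> filter id) (replicate_pmf s (bernoulli_pmf (1/2)))))"
    unfolding coord_msgs_def pp map_bind_pmf map_return_pmf map_pmf_comp
  proof (rule bind_pmf_cong[OF refl])
    fix s
    show "replicate_pmf s (bernoulli_pmf (1 / 2)) \<bind>
          (\<lambda>xa. return_pmf (cnt k ({#(j, x = j)#} + mset (map (Pair j) xa)))) =
        map_pmf (\<lambda>xa. sgl j (of_bool (x = j) + (length \<circ> filter id) xa))
          (replicate_pmf s (bernoulli_pmf (1 / 2)))"
      unfolding map_pmf_def o_def by (simp only: cnt_coord[OF j])
  qed
  also have "\<dots> = bind_pmf (poi (lam / real N)) (\<lambda>s. map_pmf (\<lambda>c. sgl j (of_bool (x = j) + c)) (binomial_pmf s (1/2)))"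
    by (subst binomial_pmf_altdef) auto
  also have "\<dots> = map_pmf (\<lambda>c. sgl j (of_bool (x = j) + c)) (bind_pmf (poi (lam / real N)) (\<lambda>s. binomial_pmf s (1/2)))"
    by (simp add: map_bind_pmf)
  also have "\<dots> = map_pmf (\<lambda>c. sgl j (of_bool (x = j) + c)) (poi (lam / real N / 2))"
    using lam by (subst poi_thin) auto
  finally show ?thesis .
qed


lemma vsum_sgls:
  assumes "distinct js"
  shows "vsum_pmf (map (\<lambda>j. map_pmf (\<lambda>c. sgl j (ofs j + c)) (Q j)) js) =
         map_pmf (\<lambda>v i. if i \<in> set js then ofs i + v i else 0) (Pi_pmf (set js) 0 Q)"
  using assms
proof (induction js)
  case Nil
  then show ?case by simp
next
  case (Cons j js)
  have "vsum_pmf (map (\<lambda>j. map_pmf (\<lambda>c. sgl j (ofs j + c)) (Q j)) (j # js)) =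
    bind_pmf (Q j) (\<lambda>y. bind_pmf (Pi_pmf (set js) 0 Q) (\<lambda>f. return_pmf
       (vadd (sgl j (ofs j + y)) (\<lambda>i. if i \<in> set js then ofs i + f i else 0))))"
    using Cons by (simp add: bind_map_pmf map_pmf_def bind_assoc_pmf bind_return_pmf)
  also have "\<dots> = bind_pmf (Q j) (\<lambda>y. bind_pmf (Pi_pmf (set js) 0 Q) (\<lambda>f. return_pmf
       ((\<lambda>v i. if i \<in> set (j # js) then ofs i + v i else 0) (f(j := y)))))"
    using Cons.prems by (intro bind_pmf_cong refl arg_cong[where f=return_pmf])
      (auto simp: vadd_def sgl_def fun_eq_iff)
  also have "\<dots> = map_pmf (\<lambda>v i. if i \<in> set (j # js) then ofs i + v i else 0) (Pi_pmf (set (j # js)) 0 Q)"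
    using Cons.prems
    by (simp add: Pi_pmf_insert pair_pmf_def map_pmf_def bind_assoc_pmf bind_return_pmf)
  finally show ?case .
qed

definition ind :: "nat set \<Rightarrow> nat \<Rightarrow> nat \<Rightarrow> nat" where
  "ind S x = (\<lambda>i. if i \<in> S then of_bool (x = i) else 0)"

lemma map_cnt_user:
  assumes N: "N > 0" and lam: "lam > 0"
  shows "map_pmf (cnt k) (user_msgs k lam N p) =
         map_pmf vadd2 (pair_pmf (map_pmf (ind {1..k}) p) (Pi_pmf {1..k} 0 (\<lambda>_. poi (lam / real N / 2))))"
proof -
  have "map_pmf (cnt k) (user_msgs k lam N p) =
    bind_pmf p (\<lambda>x. vsum_pmf (map (\<lambda>j. map_pmf (\<lambda>c. sgl j (of_bool (x = j) + c)) (poi (lam / real N / 2))) [1..<k+1]))"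
    unfolding user_msgs_def map_bind_pmf map_cnt_msum map_map
    by (intro bind_pmf_cong refl arg_cong[where f=vsum_pmf] map_cong) (auto simp: map_cnt_coord[OF _ N lam])
  also have "\<dots> = bind_pmf p (\<lambda>x. map_pmf (\<lambda>v i. if i \<in> {1..k} then of_bool (x = i) + v i else 0)
       (Pi_pmf {1..k} 0 (\<lambda>_. poi (lam / real N / 2))))"
  proof (rule bind_pmf_cong[OF refl])
    fix x
    have eqset: "set [1..<k+1] = {1..k}" by auto
    show "vsum_pmf (map (\<lambda>j. map_pmf (\<lambda>c. sgl j (of_bool (x = j) + c)) (poi (lam / real N / 2))) [1..<k+1]) =
      map_pmf (\<lambda>v i. if i \<in> {1..k} then of_bool (x = i) + v i else 0) (Pi_pmf {1..k} 0 (\<lambda>_. poi (lam / real N / 2)))"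
      using vsum_sgls[where js="[1..<k+1]" and ofs="\<lambda>i. of_bool (x = i)" and Q="\<lambda>_. poi (lam / real N / 2)", OF distinct_upt]
      by (simp only: eqset)
  qed
  also have "\<dots> = bind_pmf p (\<lambda>x. map_pmf (\<lambda>v. vadd (ind {1..k} x) v)
       (Pi_pmf {1..k} 0 (\<lambda>_. poi (lam / real N / 2))))"
  proof (rule bind_pmf_cong[OF refl], rule map_pmf_cong[OF refl])
    fix x v assume v: "v \<in> set_pmf (Pi_pmf {1..k} 0 (\<lambda>_. poi (lam / real N / 2)))"
    have "\<And>i. i \<notin> {1..k} \<Longrightarrow> v i = 0" using Pi_supp[OF _ v] by auto
    then show "(\<lambda>i. if i \<in> {1..k} then of_bool (x = i) + v i else 0) = vadd (ind {1..k} x) v"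
      by (auto simp: vadd_def ind_def fun_eq_iff)
  qed
  also have "\<dots> = map_pmf vadd2 (pair_pmf (map_pmf (ind {1..k}) p) (Pi_pmf {1..k} 0 (\<lambda>_. poi (lam / real N / 2))))"
    unfolding map_vadd2_pair bind_map_pmf by (simp add: map_pmf_def)
  finally show ?thesis .
qed

lemma vsum_rep_pair:
  "vsum_pmf (replicate N (map_pmf vadd2 (pair_pmf X Y))) =
   map_pmf vadd2 (pair_pmf (vsum_pmf (replicate N X)) (vsum_pmf (replicate N Y)))"
proof (induction N)
  case 0
  then show ?case by simp
next
  case (Suc N)
  let ?VX = "vsum_pmf (replicate N X)" and ?VY = "vsum_pmf (replicate N Y)"
  have "vsum_pmf (replicate (Suc N) (map_pmf vadd2 (pair_pmf X Y))) =
    bind_pmf X (\<lambda>x. bind_pmf Y (\<lambda>y. bind_pmf ?VX (\<lambda>u. bind_pmf ?VY (\<lambda>w. return_pmf (vadd (vadd x y) (vadd u w))))))"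
    by (simp only: replicate_Suc vsum_pmf.simps Suc.IH) (simp add: map_vadd2_pair bind_assoc_pmf bind_return_pmf)
  also have "\<dots> = bind_pmf X (\<lambda>x. bind_pmf ?VX (\<lambda>u. bind_pmf Y (\<lambda>y. bind_pmf ?VY (\<lambda>w. return_pmf (vadd (vadd x y) (vadd u w))))))"
    by (rule bind_pmf_cong[OF refl], rule bind_commute_pmf)
  also have "\<dots> = bind_pmf X (\<lambda>x. bind_pmf ?VX (\<lambda>u. bind_pmf Y (\<lambda>y. bind_pmf ?VY (\<lambda>w. return_pmf (vadd (vadd x u) (vadd y w))))))"
    by (simp add: vadd_def add_ac)
  also have "\<dots> = map_pmf vadd2 (pair_pmf (vsum_pmf (replicate (Suc N) X)) (vsum_pmf (replicate (Suc N) Y)))"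
    by (simp add: map_vadd2_pair bind_assoc_pmf bind_return_pmf)
  finally show ?case .
qed

lemma vsum_rep_Pi_poi:
  assumes S: "finite S" and r: "0 \<le> r"
  shows "vsum_pmf (replicate N (Pi_pmf S 0 (\<lambda>_. poi r))) = Pi_pmf S 0 (\<lambda>_. poi (real N * r))"
proof (induction N)
  case 0
  then show ?case using S by (simp add: poi_0)
next
  case (Suc N)
  have "vsum_pmf (replicate (Suc N) (Pi_pmf S 0 (\<lambda>_. poi r))) =
    map_pmf vadd2 (pair_pmf (Pi_pmf S 0 (\<lambda>_. poi r)) (Pi_pmf S 0 (\<lambda>_. poi (real N * r))))"
    by (simp add: Suc.IH map_vadd2_pair)
  also have "\<dots> = Pi_pmf S 0 (\<lambda>_. poi (r + real N * r))"
    using S r by (simp add: Pi_add poi_add)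
  finally show ?case by (simp add: algebra_simps)
qed



definition Tm :: "nat set \<Rightarrow> nat pmf \<Rightarrow> nat \<Rightarrow> (nat \<Rightarrow> nat) pmf" where
  "Tm S p N = vsum_pmf (replicate N (map_pmf (ind S) p))"

definition mform :: "nat set \<Rightarrow> nat pmf \<Rightarrow> nat \<Rightarrow> (nat \<Rightarrow> nat) \<Rightarrow> real" where
  "mform S p N d = (if (\<forall>i. i \<notin> S \<longrightarrow> d i = 0) \<and> sum d S = N
     then fact N / (\<Prod>i\<in>S. fact (d i)) * (\<Prod>i\<in>S. pmf p i ^ d i) else 0)"

lemma vadd_ind: "x \<in> S \<Longrightarrow> vadd (ind S x) b = b(x := b x + 1)"
  by (auto simp: fun_eq_iff vadd_def ind_def)

lemma pmf_map_vadd_ind: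
  assumes x: "x \<in> S"
  shows "pmf (map_pmf (vadd (ind S x)) T) d = (if 1 \<le> d x then pmf T (d(x := d x - 1)) else 0)"
proof -
  have e: "vadd (ind S x) b = d \<longleftrightarrow> (1 \<le> d x \<and> b = d(x := d x - 1))" for b
  proof
    assume "vadd (ind S x) b = d"
    then have "d = b(x := b x + 1)" using vadd_ind[OF x] by simp
    then show "1 \<le> d x \<and> b = d(x := d x - 1)" by (simp add: fun_eq_iff)
  next
    assume a: "1 \<le> d x \<and> b = d(x := d x - 1)"
    then have "b(x := b x + 1) = d" by (auto simp: fun_eq_iff)
    then show "vadd (ind S x) b = d" using vadd_ind[OF x] by simp
  qed
  have "vadd (ind S x) -` {d} = (if 1 \<le> d x then {d(x := d x - 1)} else {})"
    using e by auto
  then show ?thesis by (simp add: pmf_map measure_pmf_single)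
qed

lemma mform_term:
  assumes S: "finite S" and x: "x \<in> S"
  shows "(if 1 \<le> d x then mform S p N (d(x := d x - 1)) else 0) * pmf p x =
    (if (\<forall>i. i \<notin> S \<longrightarrow> d i = 0) \<and> sum d S = Suc N
       then fact N * real (d x) / (\<Prod>i\<in>S. fact (d i)) * (\<Prod>i\<in>S. pmf p i ^ d i) else 0)"
proof (cases "1 \<le> d x")
  case False
  then show ?thesis by auto
next
  case True
  define d' where "d' = d(x := d x - 1)"
  have sd: "sum d S = d x + sum d (S - {x})" using S x by (simp add: sum.remove)
  have sd': "sum d' S = (d x - 1) + sum d (S - {x})" using S x
    by (simp add: sum.remove d'_def)
  have out: "(\<forall>i. i \<notin> S \<longrightarrow> d' i = 0) \<longleftrightarrow> (\<forall>i. i \<notin> S \<longrightarrow> d i = 0)"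
    using x by (auto simp: d'_def)
  have cnd: "sum d' S = N \<longleftrightarrow> sum d S = Suc N" using sd sd' True by auto
  define F where "F = (\<Prod>i\<in>S - {x}. (fact (d i) :: real))"
  define Pw where "Pw = (\<Prod>i\<in>S - {x}. pmf p i ^ d i)"
  have F': "(\<Prod>i\<in>S. (fact (d' i) :: real)) = fact (d x - 1) * F"
    using S x by (simp add: prod.remove F_def d'_def)
  have F0: "(\<Prod>i\<in>S. (fact (d i) :: real)) = fact (d x) * F"
    using S x by (simp add: prod.remove F_def)
  have P': "(\<Prod>i\<in>S. pmf p i ^ d' i) = pmf p x ^ (d x - 1) * Pw"
    using S x by (simp add: prod.remove Pw_def d'_def)
  have P0: "(\<Prod>i\<in>S. pmf p i ^ d i) = pmf p x ^ d x * Pw"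
    using S x by (simp add: prod.remove Pw_def)
  obtain m where m: "d x = Suc m" using True by (cases "d x") auto
  have fx: "(fact (d x) :: real) = real (d x) * fact (d x - 1)"
    unfolding m by simp
  have px: "pmf p x ^ d x = pmf p x * pmf p x ^ (d x - 1)"
    unfolding m by simp
  have Fpos: "F > 0" unfolding F_def by (intro prod_pos) auto
  have "fact N / (fact (d x - 1) * F) * (pmf p x ^ (d x - 1) * Pw) * pmf p x =
        fact N * real (d x) / (fact (d x) * F) * (pmf p x ^ d x * Pw)"
    using Fpos True unfolding fx px by (simp add: field_simps)
  have L: "(if 1 \<le> d x then mform S p N (d(x := d x - 1)) else 0) = mform S p N d'"
    using True by (simp add: d'_def)
  show ?thesis
  proof (cases "(\<forall>i. i \<notin> S \<longrightarrow> d i = 0) \<and> sum d S = Suc N")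
    case C: True
    then have "mform S p N d' = fact N / (\<Prod>i\<in>S. fact (d' i)) * (\<Prod>i\<in>S. pmf p i ^ d' i)"
      using out cnd unfolding mform_def by simp
    then show ?thesis unfolding L using C F' F0 P' P0 \<open>fact N / (fact (d x - 1) * F) * (pmf p x ^ (d x - 1) * Pw) * pmf p x =
        fact N * real (d x) / (fact (d x) * F) * (pmf p x ^ d x * Pw)\<close> by simp
  next
    case C: False
    then have "mform S p N d' = 0"
      using out cnd unfolding mform_def by auto
    then show ?thesis unfolding L by (simp only: if_not_P[OF C])
  qed
qed

lemma pmf_Tm:
  assumes S: "finite S" and p: "set_pmf p \<subseteq> S"
  shows "pmf (Tm S p N) d = mform S p N d"
proof (induction N arbitrary: d)
  case 0
  have "(\<forall>i. i \<notin> S \<longrightarrow> d i = 0) \<and> sum d S = 0 \<longleftrightarrow> d = (\<lambda>_. 0)"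
    using S by (auto simp: fun_eq_iff sum_eq_0_iff)
  then show ?case by (auto simp: Tm_def mform_def indicator_def)
next
  case (Suc N)
  have "Tm S p (Suc N) = bind_pmf p (\<lambda>x. map_pmf (vadd (ind S x)) (Tm S p N))"
    unfolding Tm_def replicate_Suc vsum_pmf.simps bind_map_pmf
    by (rule bind_pmf_cong[OF refl]) (simp add: map_pmf_def)
  then have "pmf (Tm S p (Suc N)) d = measure_pmf.expectation p (\<lambda>x. pmf (map_pmf (vadd (ind S x)) (Tm S p N)) d)"
    by (simp add: pmf_bind)
  also have "\<dots> = (\<Sum>x\<in>S. pmf (map_pmf (vadd (ind S x)) (Tm S p N)) d * pmf p x)"
    by (rule integral_measure_pmf_real) (use S p in auto)
  also have "\<dots> = (\<Sum>x\<in>S. (if 1 \<le> d x then mform S p N (d(x := d x - 1)) else 0) * pmf p x)"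
    by (intro sum.cong refl) (simp only: pmf_map_vadd_ind Suc.IH)
  also have "\<dots> = (\<Sum>x\<in>S. (if (\<forall>i. i \<notin> S \<longrightarrow> d i = 0) \<and> sum d S = Suc N
       then fact N * real (d x) / (\<Prod>i\<in>S. fact (d i)) * (\<Prod>i\<in>S. pmf p i ^ d i) else 0))"
    by (intro sum.cong refl mform_term S)
  also have "\<dots> = mform S p (Suc N) d"
  proof (cases "(\<forall>i. i \<notin> S \<longrightarrow> d i = 0) \<and> sum d S = Suc N")
    case True
    have "(\<Sum>x\<in>S. fact N * real (d x) / (\<Prod>i\<in>S. fact (d i)) * (\<Prod>i\<in>S. pmf p i ^ d i))
        = fact N * real (sum d S) / (\<Prod>i\<in>S. fact (d i)) * (\<Prod>i\<in>S. pmf p i ^ d i)"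
      by (simp add: sum_distrib_right sum_distrib_left sum_divide_distrib)
    also have "\<dots> = mform S p (Suc N) d"
      using True by (simp add: mform_def algebra_simps)
    finally show ?thesis using True by simp
  next
    case False
    show ?thesis unfolding mform_def by (simp only: if_not_P[OF False]) simp
  qed
  finally show ?case .
qed

lemma poissonize:
  assumes S: "finite S" and p: "set_pmf p \<subseteq> S" and n: "0 \<le> n"
  shows "bind_pmf (poi n) (Tm S p) = Pi_pmf S 0 (\<lambda>i. poi (n * pmf p i))"
proof (rule pmf_eqI)
  fix d :: "nat \<Rightarrow> nat"
  let ?s = "sum d S"
  have "pmf (bind_pmf (poi n) (Tm S p)) d = measure_pmf.expectation (poi n) (\<lambda>N. mform S p N d)"
    by (simp add: pmf_bind pmf_Tm[OF S p])
  also have "\<dots> = (\<Sum>N\<in>{?s}. mform S p N d * pmf (poi n) N)"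
    by (rule integral_measure_pmf_real) (auto simp: mform_def split: if_splits)
  also have "\<dots> = mform S p ?s d * pmf (poi n) ?s" by simp
  also have "\<dots> = pmf (Pi_pmf S 0 (\<lambda>i. poi (n * pmf p i))) d"
  proof (cases "\<forall>i. i \<notin> S \<longrightarrow> d i = 0")
    case False
    then have "mform S p ?s d = 0" unfolding mform_def by auto
    moreover have "pmf (Pi_pmf S 0 (\<lambda>i. poi (n * pmf p i))) d = 0"
      using False by (subst pmf_Pi[OF S]) auto
    ultimately show ?thesis by simp
  next
    case True
    have sp: "sum (pmf p) S = 1" using S p by (rule sum_pmf_eq_1)
    have e: "exp (- n) = (\<Prod>i\<in>S. exp (- (n * pmf p i)))"
    proof -
      have "- n = (\<Sum>i\<in>S. - (n * pmf p i))"
        by (simp add: sum_negf sum_distrib_left[symmetric] sp)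
      then show ?thesis using S by (simp add: exp_sum)
    qed
    have np: "n ^ ?s = (\<Prod>i\<in>S. n ^ d i)" by (rule power_sum)
    have fpos: "(\<Prod>i\<in>S. (fact (d i) :: real)) \<noteq> 0"
      by (rule prod_pos[THEN less_imp_neq, symmetric]) auto
    have "pmf (Pi_pmf S 0 (\<lambda>i. poi (n * pmf p i))) d = (\<Prod>i\<in>S. (n * pmf p i) ^ d i / fact (d i) * exp (- (n * pmf p i)))"
      using S True n by (simp add: pmf_Pi pmf_poi)
    also have "\<dots> = (\<Prod>i\<in>S. n ^ d i) * (\<Prod>i\<in>S. pmf p i ^ d i) / (\<Prod>i\<in>S. fact (d i)) * (\<Prod>i\<in>S. exp (- (n * pmf p i)))"
      by (simp add: prod.distrib prod_dividef power_mult_distrib)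
    also have "\<dots> = mform S p ?s d * pmf (poi n) ?s"
      using True n fpos unfolding mform_def np[symmetric] e[symmetric]
      by (simp add: pmf_poi field_simps)
    finally show ?thesis ..
  qed
  finally show "pmf (bind_pmf (poi n) (Tm S p)) d = pmf (Pi_pmf S 0 (\<lambda>i. poi (n * pmf p i))) d" .
qed



lemma pair_bind_left: "pair_pmf (bind_pmf A f) B = bind_pmf A (\<lambda>x. pair_pmf (f x) B)"
  unfolding pair_pmf_def by (simp add: bind_assoc_pmf)

lemma protocol_law:
  assumes n: "n > 0" and lam: "lam > 0"
  shows "map_pmf (cnt k) (protocol k n lam p) =
    bind_pmf (poi n) (\<lambda>N. map_pmf vadd2 (pair_pmf (Tm {1..k} p N)
       (Pi_pmf {1..k} 0 (\<lambda>_. poi (if N = 0 then 0 else lam / 2)))))"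
proof -
  have pp: "poisson_pmf n = poi n" using n by (simp add: poi_def)
  show ?thesis
    unfolding protocol_def pp map_bind_pmf map_cnt_msum map_replicate
  proof (rule bind_pmf_cong[OF refl])
    fix N :: nat
    show "vsum_pmf (replicate N (map_pmf (cnt k) (user_msgs k lam N p))) =
      map_pmf vadd2 (pair_pmf (Tm {1..k} p N) (Pi_pmf {1..k} 0 (\<lambda>_. poi (if N = 0 then 0 else lam / 2))))"
    proof (cases "N = 0")
      case True
      then show ?thesis by (simp add: Tm_def poi_0)
    next
      case False
      then have N: "N > 0" by simp
      have "vsum_pmf (replicate N (map_pmf (cnt k) (user_msgs k lam N p))) =
        map_pmf vadd2 (pair_pmf (Tm {1..k} p N) (vsum_pmf (replicate N (Pi_pmf {1..k} 0 (\<lambda>_. poi (lam / real N / 2))))))"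
        unfolding map_cnt_user[OF N lam] vsum_rep_pair Tm_def ..
      also have "vsum_pmf (replicate N (Pi_pmf {1..k} 0 (\<lambda>_. poi (lam / real N / 2)))) =
          Pi_pmf {1..k} 0 (\<lambda>_. poi (real N * (lam / real N / 2)))"
        using lam by (intro vsum_rep_Pi_poi) auto
      also have "real N * (lam / real N / 2) = (if N = 0 then 0 else lam / 2)"
        using N by simp
      finally show ?thesis .
    qed
  qed
qed

definition model :: "nat \<Rightarrow> real \<Rightarrow> real \<Rightarrow> nat pmf \<Rightarrow> (nat \<Rightarrow> nat) pmf" where
  "model k n lam p = Pi_pmf {1..k} 0 (\<lambda>i. poi (n * pmf p i + lam / 2))"

lemma model_law:
  assumes n: "n > 0" and lam: "lam > 0" and p: "set_pmf p \<subseteq> {1..k}"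
  shows "model k n lam p =
    bind_pmf (poi n) (\<lambda>N. map_pmf vadd2 (pair_pmf (Tm {1..k} p N) (Pi_pmf {1..k} 0 (\<lambda>_. poi (lam / 2)))))"
proof -
  have "model k n lam p = Pi_pmf {1..k} 0 (\<lambda>i. map_pmf (\<lambda>(x,y). x + y) (pair_pmf (poi (n * pmf p i)) (poi (lam / 2))))"
    unfolding model_def using n lam by (intro Pi_pmf_cong refl) (simp add: poi_add)
  also have "\<dots> = map_pmf vadd2 (pair_pmf (Pi_pmf {1..k} 0 (\<lambda>i. poi (n * pmf p i))) (Pi_pmf {1..k} 0 (\<lambda>_. poi (lam / 2))))"
    by (rule Pi_add[symmetric]) simp
  also have "\<dots> = map_pmf vadd2 (pair_pmf (bind_pmf (poi n) (Tm {1..k} p)) (Pi_pmf {1..k} 0 (\<lambda>_. poi (lam / 2))))"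
    using n p by (subst poissonize) auto
  also have "\<dots> = bind_pmf (poi n) (\<lambda>N. map_pmf vadd2 (pair_pmf (Tm {1..k} p N) (Pi_pmf {1..k} 0 (\<lambda>_. poi (lam / 2)))))"
    by (simp add: pair_bind_left map_bind_pmf)
  finally show ?thesis .
qed

lemma protocol_vs_model:
  assumes n: "n > 0" and lam: "lam > 0" and p: "set_pmf p \<subseteq> {1..k}"
  shows "measure_pmf.prob (map_pmf (cnt k) (protocol k n lam p)) E \<le> measure_pmf.prob (model k n lam p) E + exp (- n)"
proof -
  define F where "F = (\<lambda>N. map_pmf vadd2 (pair_pmf (Tm {1..k} p N)
       (Pi_pmf {1..k} 0 (\<lambda>_. poi (if N = 0 then 0 else lam / 2)))))"
  define G where "G = (\<lambda>N. map_pmf vadd2 (pair_pmf (Tm {1..k} p N) (Pi_pmf {1..k} 0 (\<lambda>_. poi (lam / 2)))))"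
  have FG: "emeasure (measure_pmf (F N)) E \<le> emeasure (measure_pmf (G N)) E + indicator {0} N" for N
  proof (cases "N = 0")
    case True
    have "emeasure (measure_pmf (F N)) E \<le> 1" by (rule measure_pmf.emeasure_le_1)
    then show ?thesis using True by (simp add: add_increasing)
  next
    case False
    then show ?thesis by (simp add: F_def G_def)
  qed
  have "emeasure (measure_pmf (map_pmf (cnt k) (protocol k n lam p))) E = (\<integral>\<^sup>+N. emeasure (measure_pmf (F N)) E \<partial>poi n)"
    unfolding protocol_law[OF n lam] F_def by simp
  also have "\<dots> \<le> (\<integral>\<^sup>+N. emeasure (measure_pmf (G N)) E + indicator {0} N \<partial>poi n)"
    by (intro nn_integral_mono FG)
  also have "\<dots> = (\<integral>\<^sup>+N. emeasure (measure_pmf (G N)) E \<partial>poi n) + (\<integral>\<^sup>+N. indicator {0} N \<partial>poi n)"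
    by (rule nn_integral_add) auto
  also have "(\<integral>\<^sup>+N. emeasure (measure_pmf (G N)) E \<partial>poi n) = emeasure (measure_pmf (model k n lam p)) E"
    unfolding model_law[OF n lam p] G_def by simp
  also have "(\<integral>\<^sup>+N. indicator {0} N \<partial>poi n) = ennreal (exp (- n))"
    using n by (simp add: emeasure_pmf_single pmf_poi)
  finally have "ennreal (measure_pmf.prob (map_pmf (cnt k) (protocol k n lam p)) E)
      \<le> ennreal (measure_pmf.prob (model k n lam p) E) + ennreal (exp (- n))"
    by (simp add: measure_pmf.emeasure_eq_measure)
  then show ?thesis by (simp add: ennreal_plus[symmetric] del: ennreal_plus)
qed



definition hf :: "real \<Rightarrow> real \<Rightarrow> nat \<Rightarrow> real" where
  "hf m L y = (real y - m)^2 - real y - (L - m)^2"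

lemma poi_hf:
  assumes L: "0 \<le> L"
  shows "integrable (poi L) (hf m L)" "measure_pmf.expectation (poi L) (hf m L) = 0"
        "integrable (poi L) (\<lambda>y. (hf m L y)^2)"
        "measure_pmf.expectation (poi L) (\<lambda>y. (hf m L y)^2) = 2 * L^2 + 4 * (L - m)^2 * L"
proof -
  define b where "b = - (2 * m + 1)"
  define c where "c = m^2 - (L - m)^2"
  have e1: "hf m L = (\<lambda>y. c + b * real y + 1 * real y ^ 2 + 0 * real y ^ 3 + 0 * real y ^ 4)"
    by (rule ext) (simp add: hf_def b_def c_def power2_eq_square algebra_simps)
  have e2: "(\<lambda>y. (hf m L y)^2) = (\<lambda>y. c^2 + (2*b*c) * real y + (b^2 + 2*c) * real y ^ 2 + (2*b) * real y ^ 3 + 1 * real y ^ 4)"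
    by (rule ext) (simp add: hf_def b_def c_def power2_eq_square power3_eq_cube power4_eq_xxxx algebra_simps)
  show "integrable (poi L) (hf m L)" unfolding e1 by (rule poi_poly[OF L])
  show "measure_pmf.expectation (poi L) (hf m L) = 0" unfolding e1 poi_poly[OF L]
    by (simp add: b_def c_def power2_eq_square algebra_simps)
  show "integrable (poi L) (\<lambda>y. (hf m L y)^2)" unfolding e2 by (rule poi_poly[OF L])
  show "measure_pmf.expectation (poi L) (\<lambda>y. (hf m L y)^2) = 2 * L^2 + 4 * (L - m)^2 * L"
    unfolding e2 poi_poly[OF L]
    by (simp add: b_def c_def power2_eq_square power3_eq_cube power4_eq_xxxx algebra_simps)
qed

lemma hf_lower: "hf m L y \<ge> - (m + 1/4) - (L - m)^2"
proof -
  have "0 \<le> (real y - m - 1/2)^2" by simp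
  then show ?thesis unfolding hf_def by (simp add: power2_eq_square algebra_simps)
qed

lemma Pi_marg:
  fixes g :: "'b \<Rightarrow> real"
  assumes S: "finite S" and i: "i \<in> S"
  shows "measure_pmf.expectation (Pi_pmf S d P) (\<lambda>v. g (v i)) = measure_pmf.expectation (P i) g"
    and "integrable (P i) g \<Longrightarrow> integrable (Pi_pmf S d P) (\<lambda>v. g (v i))"
proof -
  have m: "map_pmf (\<lambda>v. v i) (Pi_pmf S d P) = P i" using S i by (simp add: Pi_pmf_component)
  show "measure_pmf.expectation (Pi_pmf S d P) (\<lambda>v. g (v i)) = measure_pmf.expectation (P i) g"
    by (subst m[symmetric]) simp
  show "integrable (P i) g \<Longrightarrow> integrable (Pi_pmf S d P) (\<lambda>v. g (v i))"
    by (subst (asm) m[symmetric]) simp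
qed

lemma prod_two:
  assumes S: "finite S" and ij: "i \<in> S" "j \<in> S" "i \<noteq> j"
  shows "(\<Prod>x\<in>S. (if x = i then a else if x = j then b else (1::real))) = a * b"
proof -
  have "(\<Prod>x\<in>S. (if x = i then a else if x = j then b else (1::real))) =
        a * (\<Prod>x\<in>S - {i}. (if x = i then a else if x = j then b else (1::real)))"
    using S ij by (subst prod.remove[of S i]) auto
  also have "(\<Prod>x\<in>S - {i}. (if x = i then a else if x = j then b else (1::real))) =
        b * (\<Prod>x\<in>S - {i} - {j}. (if x = i then a else if x = j then b else (1::real)))"
    using S ij by (subst prod.remove[of "S - {i}" j]) auto
  also have "(\<Prod>x\<in>S - {i} - {j}. (if x = i then a else if x = j then b else (1::real))) = 1"
    by (intro prod.neutral) auto
  finally show ?thesis by simp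
qed

lemma Pi_cross:
  assumes S: "finite S" and ij: "i \<in> S" "j \<in> S" "i \<noteq> j" and L: "\<And>i. L i \<ge> 0"
  defines "M \<equiv> Pi_pmf S 0 (\<lambda>i. poi (L i))"
  shows "integrable M (\<lambda>v. hf m (L i) (v i) * hf m (L j) (v j))"
        "measure_pmf.expectation M (\<lambda>v. hf m (L i) (v i) * hf m (L j) (v j)) = 0"
proof -
  define c where "c = \<bar>m\<bar> + 1/4 + (L i - m)^2 + (L j - m)^2"
  define F where "F = (\<lambda>x. if x = i then (\<lambda>y. hf m (L i) y + c) else if x = j then (\<lambda>y. hf m (L j) y + c) else (\<lambda>_. (1::real)))"
  define H where "H = (\<lambda>x. if x = i then hf m (L i) else if x = j then hf m (L j) else (\<lambda>_. (1::real)))"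
  have pF: "(\<Prod>x\<in>S. F x (v x)) = (hf m (L i) (v i) + c) * (hf m (L j) (v j) + c)" for v
  proof -
    have "(\<Prod>x\<in>S. F x (v x)) = (\<Prod>x\<in>S. (if x = i then hf m (L i) (v i) + c else if x = j then hf m (L j) (v j) + c else 1))"
      by (rule prod.cong[OF refl]) (simp add: F_def)
    then show ?thesis using prod_two[OF S ij] by simp
  qed
  have pH: "(\<Prod>x\<in>S. H x (v x)) = hf m (L i) (v i) * hf m (L j) (v j)" for v
  proof -
    have "(\<Prod>x\<in>S. H x (v x)) = (\<Prod>x\<in>S. (if x = i then hf m (L i) (v i) else if x = j then hf m (L j) (v j) else 1))"
      by (rule prod.cong[OF refl]) (simp add: H_def)
    then show ?thesis using prod_two[OF S ij] by simp
  qed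
  have intH: "integrable (poi (L x)) (H x)" for x
    by (auto simp: H_def poi_hf L)
  have intF: "integrable (poi (L x)) (F x)" for x
    by (auto simp: F_def poi_hf L)
  have nnF: "F x y \<ge> 0" for x y
  proof -
    have a: "m \<le> \<bar>m\<bar>" "0 \<le> (L i - m)^2" "0 \<le> (L j - m)^2" by auto
    have "hf m (L i) y + c \<ge> 0" "hf m (L j) y + c \<ge> 0"
      using hf_lower[of m "L i" y] hf_lower[of m "L j" y] a unfolding c_def by linarith+
    then show ?thesis by (auto simp: F_def)
  qed
  show iH: "integrable M (\<lambda>v. hf m (L i) (v i) * hf m (L j) (v j))"
    unfolding M_def using integrable_prod_Pi_pmf[OF S, of "\<lambda>i. poi (L i)" H, OF intH] by (simp add: pH)
  have EF: "measure_pmf.expectation M (\<lambda>v. (hf m (L i) (v i) + c) * (hf m (L j) (v j) + c)) = c * c"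
  proof -
    have "measure_pmf.expectation M (\<lambda>v. (\<Prod>x\<in>S. F x (v x))) = (\<Prod>x\<in>S. measure_pmf.expectation (poi (L x)) (F x))"
      unfolding M_def by (rule expectation_prod_Pi_pmf[OF S intF nnF])
    also have "(\<Prod>x\<in>S. measure_pmf.expectation (poi (L x)) (F x)) =
       (\<Prod>x\<in>S. (if x = i then c else if x = j then c else 1))"
      by (intro prod.cong refl) (auto simp: F_def poi_hf L)
    also have "\<dots> = c * c" by (rule prod_two[OF S ij])
    finally show ?thesis by (simp add: pF)
  qed
  have I1: "integrable M (\<lambda>v. hf m (L i) (v i))" unfolding M_def
    by (rule Pi_marg(2)[OF S ij(1)]) (simp add: poi_hf L)
  have I2: "integrable M (\<lambda>v. hf m (L j) (v j))" unfolding M_def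
    by (rule Pi_marg(2)[OF S ij(2)]) (simp add: poi_hf L)
  have E1: "measure_pmf.expectation M (\<lambda>v. hf m (L i) (v i)) = 0" unfolding M_def
    by (subst Pi_marg(1)[OF S ij(1)]) (simp add: poi_hf L)
  have E2: "measure_pmf.expectation M (\<lambda>v. hf m (L j) (v j)) = 0" unfolding M_def
    by (subst Pi_marg(1)[OF S ij(2)]) (simp add: poi_hf L)
  have "(\<lambda>v. (hf m (L i) (v i) + c) * (hf m (L j) (v j) + c)) =
        (\<lambda>v. hf m (L i) (v i) * hf m (L j) (v j) + c * hf m (L i) (v i) + c * hf m (L j) (v j) + c * c)"
    by (rule ext) (simp add: algebra_simps)
  then have "measure_pmf.expectation M (\<lambda>v. hf m (L i) (v i) * hf m (L j) (v j)) + c * 0 + c * 0 + c * c = c * c"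
    using EF iH I1 I2 E1 E2 by (simp add: Bochner_Integration.integral_add)
  then show "measure_pmf.expectation M (\<lambda>v. hf m (L i) (v i) * hf m (L j) (v j)) = 0" by simp
qed

lemma Pi_W:
  assumes S: "finite S" and L: "\<And>i. L i \<ge> 0"
  defines "M \<equiv> Pi_pmf S 0 (\<lambda>i. poi (L i))"
  shows "integrable M (\<lambda>v. \<Sum>j\<in>S. hf m (L j) (v j))"
        "measure_pmf.expectation M (\<lambda>v. \<Sum>j\<in>S. hf m (L j) (v j)) = 0"
        "integrable M (\<lambda>v. (\<Sum>j\<in>S. hf m (L j) (v j))^2)"
        "measure_pmf.expectation M (\<lambda>v. (\<Sum>j\<in>S. hf m (L j) (v j))^2) = (\<Sum>j\<in>S. 2 * L j ^ 2 + 4 * (L j - m)^2 * L j)"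
proof -
  have I1: "integrable M (\<lambda>v. hf m (L j) (v j))" if "j \<in> S" for j unfolding M_def
    by (rule Pi_marg(2)[OF S that]) (simp add: poi_hf L)
  have E1: "measure_pmf.expectation M (\<lambda>v. hf m (L j) (v j)) = 0" if "j \<in> S" for j unfolding M_def
    by (subst Pi_marg(1)[OF S that]) (simp add: poi_hf L)
  show "integrable M (\<lambda>v. \<Sum>j\<in>S. hf m (L j) (v j))" using I1 by auto
  show "measure_pmf.expectation M (\<lambda>v. \<Sum>j\<in>S. hf m (L j) (v j)) = 0"
    using I1 E1 by (subst Bochner_Integration.integral_sum) auto
  have sq: "(\<lambda>v. (\<Sum>j\<in>S. hf m (L j) (v j))^2) = (\<lambda>v. \<Sum>i\<in>S. \<Sum>j\<in>S. hf m (L i) (v i) * hf m (L j) (v j))"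
    by (rule ext) (simp add: power2_eq_square sum_product)
  have I2: "integrable M (\<lambda>v. hf m (L i) (v i) * hf m (L j) (v j))" if "i \<in> S" "j \<in> S" for i j
  proof (cases "i = j")
    case True
    have "integrable M (\<lambda>v. (\<lambda>y. (hf m (L i) y)^2) (v i))" unfolding M_def
      by (rule Pi_marg(2)[OF S that(1)]) (simp add: poi_hf L)
    then show ?thesis using True by (simp add: power2_eq_square)
  next
    case False
    then show ?thesis unfolding M_def using Pi_cross(1)[where L=L and m=m, OF S that False L] by simp
  qed
  have E2: "measure_pmf.expectation M (\<lambda>v. hf m (L i) (v i) * hf m (L j) (v j)) =
      (if i = j then 2 * L i ^ 2 + 4 * (L i - m)^2 * L i else 0)" if "i \<in> S" "j \<in> S" for i j
  proof (cases "i = j")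
    case True
    have "measure_pmf.expectation M (\<lambda>v. (\<lambda>y. (hf m (L i) y)^2) (v i)) = 2 * L i ^ 2 + 4 * (L i - m)^2 * L i"
      unfolding M_def by (subst Pi_marg(1)[OF S that(1)]) (simp add: poi_hf L)
    then show ?thesis using True by (simp add: power2_eq_square)
  next
    case False
    then show ?thesis unfolding M_def using Pi_cross(2)[where L=L and m=m, OF S that False L] by simp
  qed
  show "integrable M (\<lambda>v. (\<Sum>j\<in>S. hf m (L j) (v j))^2)"
    unfolding sq using I2 by (intro Bochner_Integration.integrable_sum) blast
  have "measure_pmf.expectation M (\<lambda>v. (\<Sum>j\<in>S. hf m (L j) (v j))^2) =
      (\<Sum>i\<in>S. \<Sum>j\<in>S. measure_pmf.expectation M (\<lambda>v. hf m (L i) (v i) * hf m (L j) (v j)))"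
    unfolding sq
  proof -
    have "measure_pmf.expectation M (\<lambda>v. \<Sum>i\<in>S. \<Sum>j\<in>S. hf m (L i) (v i) * hf m (L j) (v j)) =
        (\<Sum>i\<in>S. measure_pmf.expectation M (\<lambda>v. \<Sum>j\<in>S. hf m (L i) (v i) * hf m (L j) (v j)))"
    proof (rule Bochner_Integration.integral_sum)
      fix i assume "i \<in> S"
      then show "integrable M (\<lambda>v. \<Sum>j\<in>S. hf m (L i) (v i) * hf m (L j) (v j))"
        using I2 by (intro Bochner_Integration.integrable_sum) blast
    qed
    also have "\<dots> = (\<Sum>i\<in>S. \<Sum>j\<in>S. measure_pmf.expectation M (\<lambda>v. hf m (L i) (v i) * hf m (L j) (v j)))"
    proof (rule sum.cong[OF refl])
      fix i assume "i \<in> S"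
      then show "measure_pmf.expectation M (\<lambda>v. \<Sum>j\<in>S. hf m (L i) (v i) * hf m (L j) (v j)) =
         (\<Sum>j\<in>S. measure_pmf.expectation M (\<lambda>v. hf m (L i) (v i) * hf m (L j) (v j)))"
        using I2 by (intro Bochner_Integration.integral_sum) blast
    qed
    finally show "measure_pmf.expectation M (\<lambda>v. \<Sum>i\<in>S. \<Sum>j\<in>S. hf m (L i) (v i) * hf m (L j) (v j)) =
        (\<Sum>i\<in>S. \<Sum>j\<in>S. measure_pmf.expectation M (\<lambda>v. hf m (L i) (v i) * hf m (L j) (v j)))" .
  qed
  also have "\<dots> = (\<Sum>i\<in>S. \<Sum>j\<in>S. (if i = j then 2 * L i ^ 2 + 4 * (L i - m)^2 * L i else 0))"
    by (rule sum.cong[OF refl], rule sum.cong[OF refl]) (rule E2)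
  also have "\<dots> = (\<Sum>j\<in>S. 2 * L j ^ 2 + 4 * (L j - m)^2 * L j)"
    using S by (simp add: sum.delta)
  finally show "measure_pmf.expectation M (\<lambda>v. (\<Sum>j\<in>S. hf m (L j) (v j))^2) = (\<Sum>j\<in>S. 2 * L j ^ 2 + 4 * (L j - m)^2 * L j)" .
qed

lemma Pi_W_tail:
  assumes S: "finite S" and L: "\<And>i. L i \<ge> 0" and a: "a > 0"
  shows "measure_pmf.prob (Pi_pmf S 0 (\<lambda>i. poi (L i))) {v. a \<le> \<bar>\<Sum>j\<in>S. hf m (L j) (v j)\<bar>}
     \<le> (\<Sum>j\<in>S. 2 * L j ^ 2 + 4 * (L j - m)^2 * L j) / a^2"
proof -
  let ?M = "Pi_pmf S 0 (\<lambda>i. poi (L i))"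
  let ?W = "\<lambda>v. \<Sum>j\<in>S. hf m (L j) (v j)"
  have "measure_pmf.prob ?M {v \<in> space ?M. a \<le> \<bar>?W v - measure_pmf.expectation ?M ?W\<bar>}
      \<le> measure_pmf.variance ?M ?W / a^2"
    by (rule measure_pmf.Chebyshev_inequality) (use Pi_W[where L=L and m=m, OF S L] a in auto)
  then show ?thesis using Pi_W[where L=L and m=m, OF S L] by simp
qed



lemma Zstat_eq:
  fixes n lam :: real and p :: "nat pmf" and k :: nat
  defines "L \<equiv> \<lambda>i. n * pmf p i + lam / 2"
  shows "Zstat k n lam M' = (real k / n) *
    ((\<Sum>j\<in>{1..k}. hf (mu k n lam) (L j) (cnt k M' j)) + (\<Sum>j\<in>{1..k}. (L j - mu k n lam)^2))"
proof -
  have "(\<Sum>j = 1..k. (real (Nj M' j) - mu k n lam)^2 - real (Nj M' j)) =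
      (\<Sum>j\<in>{1..k}. hf (mu k n lam) (L j) (cnt k M' j) + (L j - mu k n lam)^2)"
    by (intro sum.cong refl) (simp add: hf_def cnt_def Nj_def)
  then show ?thesis unfolding Zstat_def by (simp add: sum.distrib)
qed

lemma core:
  fixes n lam t :: real and p :: "nat pmf" and k :: nat
  assumes n: "n > 0" and lam: "lam > 0" and p: "set_pmf p \<subseteq> {1..k}" and k1: "k \<ge> 1"
  defines "L \<equiv> \<lambda>i. n * pmf p i + lam / 2"
  defines "D \<equiv> (\<Sum>j\<in>{1..k}. (L j - mu k n lam)^2)"
  defines "V \<equiv> (\<Sum>j\<in>{1..k}. 2 * L j ^ 2 + 4 * (L j - mu k n lam)^2 * L j)"
  shows "t * n / real k - D > 0 \<Longrightarrow> measure_pmf.prob (protocol k n lam p) {M'. Zstat k n lam M' \<ge> t}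
           \<le> V / (t * n / real k - D)^2 + exp (- n)"
    and "D - t * n / real k > 0 \<Longrightarrow> measure_pmf.prob (protocol k n lam p) {M'. Zstat k n lam M' \<le> t}
           \<le> V / (D - t * n / real k)^2 + exp (- n)"
proof -
  let ?m = "mu k n lam"
  let ?W = "\<lambda>v. \<Sum>j\<in>{1..k}. hf ?m (L j) (v j)"
  have kpos: "real k > 0" using k1 by simp
  have Lnn: "\<And>i. L i \<ge> 0" unfolding L_def using n lam by (simp add: pmf_nonneg)
  have model: "model k n lam p = Pi_pmf {1..k} 0 (\<lambda>i. poi (L i))" unfolding model_def L_def ..
  have tail: "measure_pmf.prob (model k n lam p) {v. a \<le> \<bar>?W v\<bar>} \<le> V / a^2" if "a > 0" for a
    unfolding model V_def by (rule Pi_W_tail[OF _ Lnn that]) simp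
  have Z: "Zstat k n lam M' = (real k / n) * (?W (cnt k M') + D)" for M'
    unfolding D_def L_def by (rule Zstat_eq)
  show "measure_pmf.prob (protocol k n lam p) {M'. Zstat k n lam M' \<ge> t} \<le> V / (t * n / real k - D)^2 + exp (- n)"
    if a: "t * n / real k - D > 0"
  proof -
    have k: "real k > 0" using kpos by auto
    have "measure_pmf.prob (protocol k n lam p) {M'. Zstat k n lam M' \<ge> t} =
          measure_pmf.prob (map_pmf (cnt k) (protocol k n lam p)) {v. (real k / n) * (?W v + D) \<ge> t}"
      by (simp add: Z vimage_def)
    also have "\<dots> \<le> measure_pmf.prob (model k n lam p) {v. (real k / n) * (?W v + D) \<ge> t} + exp (- n)"
      by (rule protocol_vs_model[OF n lam p])
    also have "measure_pmf.prob (model k n lam p) {v. (real k / n) * (?W v + D) \<ge> t} \<le>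
        measure_pmf.prob (model k n lam p) {v. t * n / real k - D \<le> \<bar>?W v\<bar>}"
    proof (rule measure_pmf.finite_measure_mono)
      show "{v. (real k / n) * (?W v + D) \<ge> t} \<subseteq> {v. t * n / real k - D \<le> \<bar>?W v\<bar>}"
      proof
        fix v assume "v \<in> {v. (real k / n) * (?W v + D) \<ge> t}"
        then have "t \<le> (real k / n) * (?W v + D)" by simp
        then have "t * n / real k \<le> ?W v + D" using n k by (simp add: field_simps)
        then show "v \<in> {v. t * n / real k - D \<le> \<bar>?W v\<bar>}" by simp
      qed
    qed simp
    finally show ?thesis using tail[OF a] by simp
  qed
  show "measure_pmf.prob (protocol k n lam p) {M'. Zstat k n lam M' \<le> t} \<le> V / (D - t * n / real k)^2 + exp (- n)"
    if a: "D - t * n / real k > 0"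
  proof -
    have k: "real k > 0" using kpos by auto
    have "measure_pmf.prob (protocol k n lam p) {M'. Zstat k n lam M' \<le> t} =
          measure_pmf.prob (map_pmf (cnt k) (protocol k n lam p)) {v. (real k / n) * (?W v + D) \<le> t}"
      by (simp add: Z vimage_def)
    also have "\<dots> \<le> measure_pmf.prob (model k n lam p) {v. (real k / n) * (?W v + D) \<le> t} + exp (- n)"
      by (rule protocol_vs_model[OF n lam p])
    also have "measure_pmf.prob (model k n lam p) {v. (real k / n) * (?W v + D) \<le> t} \<le>
        measure_pmf.prob (model k n lam p) {v. D - t * n / real k \<le> \<bar>?W v\<bar>}"
    proof (rule measure_pmf.finite_measure_mono)
      show "{v. (real k / n) * (?W v + D) \<le> t} \<subseteq> {v. D - t * n / real k \<le> \<bar>?W v\<bar>}"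
      proof
        fix v assume "v \<in> {v. (real k / n) * (?W v + D) \<le> t}"
        then have "(real k / n) * (?W v + D) \<le> t" by simp
        then have "?W v + D \<le> t * n / real k" using n k by (simp add: field_simps)
        then show "v \<in> {v. D - t * n / real k \<le> \<bar>?W v\<bar>}" by simp
      qed
    qed simp
    finally show ?thesis using tail[OF a] by simp
  qed
qed



lemma base_facts:
  fixes n m \<alpha> s K :: real
  assumes k1: "K \<ge> 1" and s: "s > 0" "s \<ge> 1" "s^4 = K" and n: "n > 0"
    and a: "0 < \<alpha>" "\<alpha> \<le> 1" and m: "m \<ge> n / K" and H: "(n*\<alpha>)^2 \<ge> 1600 * s^6 * m"
  shows "n \<ge> 1600" "s^2 * m \<ge> 1600" "n * \<alpha> \<ge> 1600 * s^2"
proof -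
  have ms: "m * s^4 \<ge> n" using m k1 s(3) by (simp add: field_simps)
  have "s^6 = s^2 * s^4" by (simp flip: power_add)
  then have "1600 * s^6 * m = 1600 * s^2 * (m * s^4)" by (simp only: mult_ac)
  also have "\<dots> \<ge> 1600 * s^2 * n" using ms s by (intro mult_left_mono) auto
  finally have h1: "n * (n * \<alpha>^2) \<ge> n * (1600 * s^2)" using H by (simp add: power2_eq_square algebra_simps)
  have h2: "n * \<alpha>^2 \<ge> 1600 * s^2" using h1 n by (simp add: mult_le_cancel_left)
  have a2: "\<alpha>^2 \<le> 1" using a by (simp add: power_le_one)
  have "n \<ge> n * \<alpha>^2" using a2 n by (simp add: mult_left_le)
  then have nn: "n \<ge> 1600 * s^2" using h2 by linarith
  have "s^2 \<ge> 1" using s by (simp add: one_le_power)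
  then show "n \<ge> 1600" using nn by linarith
  have "s^2 * (s^2 * m) \<ge> s^2 * 1600" using ms nn by (simp add: power_add[symmetric] algebra_simps)
  moreover have s2: "s^2 > 0" using s by simp
  ultimately show sm: "s^2 * m \<ge> 1600" by (meson mult_le_cancel_left_pos)
  have "(1600 * s^2)^2 = 1600 * s^4 * 1600" by (simp add: power2_eq_square power4_eq_xxxx algebra_simps)
  also have "\<dots> \<le> 1600 * s^4 * (s^2 * m)" using sm s by (intro mult_left_mono) auto
  also have "\<dots> = 1600 * (s^4 * s^2) * m" by (simp only: mult_ac)
  also have "s^4 * s^2 = s^6" by (simp flip: power_add)
  also have "1600 * s^6 * m \<le> (n * \<alpha>)^2" by (rule H)
  finally have sq: "(1600 * s^2)^2 \<le> (n * \<alpha>)^2" .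
  have "0 \<le> n * \<alpha>" using n a by simp
  with sq show "n * \<alpha> \<ge> 1600 * s^2" by (rule power2_le_imp_le)
qed

lemma common:
  fixes k :: nat and n lam \<alpha> :: real
  assumes k2: "k \<ge> 2" and n: "n > 0" and lam: "lam > 0" and a0: "0 < \<alpha>" and a1: "\<alpha> \<le> 1"
    and hyp: "n \<ge> 40 * (real k powr (3/4) * sqrt (mu k n lam)) / \<alpha>"
  obtains s where "s > 0" "s \<ge> 1" "s^4 = real k" "(n*\<alpha>)^2 \<ge> 1600 * s^6 * mu k n lam"
    "n \<ge> 1600" "s^2 * mu k n lam \<ge> 1600" "n * \<alpha> \<ge> 1600 * s^2" "exp (- n) \<le> 1/12"
    "mu k n lam > 0" "mu k n lam \<ge> n / real k"
proof -
  define m where "m = mu k n lam"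
  define s where "s = real k powr (1/4)"
  have kpos: "real k > 0" using k2 by simp
  have s0: "s > 0" using kpos by (simp add: s_def)
  have s1: "s \<ge> 1" unfolding s_def using k2 by (intro ge_one_powr_ge_zero) auto
  have s4: "s^4 = real k"
  proof -
    have "s^4 = s powr (real 4)" using s0 by (simp add: powr_realpow)
    also have "\<dots> = real k" unfolding s_def using kpos by (simp add: powr_powr)
    finally show ?thesis .
  qed
  have s3: "s^3 = real k powr (3/4)"
  proof -
    have "s^3 = s powr (real 3)" using s0 by (simp add: powr_realpow)
    also have "\<dots> = real k powr (3/4)" unfolding s_def using kpos by (simp add: powr_powr)
    finally show ?thesis .
  qed
  have m0: "m > 0" unfolding m_def mu_def using n lam kpos by (intro add_pos_pos divide_pos_pos) auto
  have mn: "m \<ge> n / real k" unfolding m_def mu_def using lam by simp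
  have "n * \<alpha> \<ge> 40 * (s^3 * sqrt m)" using hyp a0 unfolding s3 m_def by (simp add: field_simps)
  moreover have "0 \<le> 40 * (s^3 * sqrt m)" using s0 m0 by simp
  ultimately have "(40 * (s^3 * sqrt m))^2 \<le> (n * \<alpha>)^2" by (intro power_mono) auto
  moreover have "(40 * (s^3 * sqrt m))^2 = 1600 * s^6 * m"
    using m0 by (simp add: power_mult_distrib power2_eq_square[of "sqrt m"] flip: power_mult)
  ultimately have H: "(n*\<alpha>)^2 \<ge> 1600 * s^6 * m" by simp
  note B = base_facts[of "real k" s n \<alpha> m, OF _ s0 s1 s4 n a0 a1 mn H]
  have "n \<ge> 1600" using B k2 by simp
  have e: "exp (- n) \<le> 1/12"
  proof -
    have "exp n \<ge> 1 + n" by (rule exp_ge_add_one_self)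
    then have "exp n \<ge> 12" using \<open>n \<ge> 1600\<close> by linarith
    then show ?thesis by (simp add: exp_minus field_simps)
  qed
  show ?thesis
    by (rule that[OF s0 s1 s4 H[unfolded m_def]]) (use B k2 e m0 mn in \<open>auto simp: m_def\<close>)
qed

lemma unif_arith:
  fixes K n m \<alpha> s V a :: real
  assumes K: "K = s^4" "s > 0" and n: "n > 0" and a0: "\<alpha> > 0" and m: "m > 0"
    and H: "(n*\<alpha>)^2 \<ge> 1600 * s^6 * m" and V: "V = 2 * K * m^2" and a: "a = 2 * n * \<alpha>^2 * n / K"
  shows "V / a^2 \<le> 1/4"
proof -
  have Kp: "K > 0" using K by simp
  have "(1600 * s^6 * m)^2 \<le> ((n*\<alpha>)^2)^2" using H m K by (intro power_mono) auto
  moreover have "(1600 * s^6 * m)^2 = 1600^2 * K^3 * m^2"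
    using K by (simp add: power_mult_distrib flip: power_mult)
  ultimately have H2: "1600^2 * K^3 * m^2 \<le> ((n*\<alpha>)^2)^2" by simp
  have "2 * K^3 * m^2 \<le> 1600^2 * K^3 * m^2" using Kp m by (intro mult_right_mono) auto
  then have H3: "2 * K^3 * m^2 \<le> ((n*\<alpha>)^2)^2" using H2 by linarith
  have apos: "a > 0" using a n a0 Kp by simp
  have aK: "a * K = 2 * (n*\<alpha>)^2" unfolding a using Kp by (simp add: power2_eq_square)
  have "(4 * V) * K^2 = 4 * (2 * K^3 * m^2)" unfolding V by (simp add: power2_eq_square power3_eq_cube)
  also have "\<dots> \<le> 4 * ((n*\<alpha>)^2)^2" using H3 by simp
  also have "\<dots> = (a * K)^2" unfolding aK by (simp add: power2_eq_square)
  also have "\<dots> = a^2 * K^2" by (simp add: power_mult_distrib)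
  finally have le: "(4 * V) * K^2 \<le> a^2 * K^2" .
  have "K^2 > 0" using Kp by simp
  then have "4 * V \<le> a^2" using le by (meson mult_le_cancel_right_pos)
  then show ?thesis using apos by (simp add: field_simps)
qed

lemma far_arith:
  fixes K m s V a R :: real
  assumes K: "K = s^4" "s \<ge> 1" and m: "m > 0" and R: "R \<ge> 3200" and R2: "R^2 \<ge> 6400 * s^2 * m"
    and V: "V \<le> 4 * K * m^2 + 4 * R^2 + 4 * m * R^2 + 4 * R^3" and a: "a \<ge> R^2 / 2"
  shows "V / a^2 \<le> 1/4"
proof -
  have R0: "R > 0" using R by simp
  have s2: "s^2 \<ge> 1" using K by (simp add: one_le_power)
  have "(6400 * s^2 * m)^2 \<le> (R^2)^2" using R2 m K by (intro power_mono) auto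
  moreover have "(6400 * s^2 * m)^2 = 6400^2 * K * m^2"
    using K by (simp add: power_mult_distrib flip: power_mult)
  ultimately have t1': "6400^2 * K * m^2 \<le> R^4" by (simp flip: power_mult)
  have "256 * (K * m^2) \<le> 6400^2 * (K * m^2)" using K m by (intro mult_right_mono) auto
  then have t1: "4 * K * m^2 \<le> R^4 / 64" using t1' by simp
  have "R^2 \<ge> 3200^2" using R by (intro power_mono) auto
  then have t2: "4 * R^2 \<le> R^4 / 64"
  proof -
    assume "R^2 \<ge> 3200^2"
    then have "256 * R^2 \<le> R^2 * R^2" by (intro mult_right_mono) auto
    then show ?thesis by (simp add: power2_eq_square power4_eq_xxxx)
  qed
  have "256 * m \<le> 6400 * s^2 * m" using s2 m by simp
  then have "256 * m \<le> R^2" using R2 by linarith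
  then have "256 * m * R^2 \<le> R^2 * R^2" by (intro mult_right_mono) auto
  then have t3: "4 * m * R^2 \<le> R^4 / 64" by (simp add: power2_eq_square power4_eq_xxxx)
  have "256 * R^3 \<le> R * R^3" using R by (intro mult_right_mono) auto
  then have t4: "4 * R^3 \<le> R^4 / 64" by (simp add: power3_eq_cube power4_eq_xxxx)
  have VR: "V \<le> R^4 / 16" using V t1 t2 t3 t4 by linarith
  have "(R^2/2)^2 \<le> a^2" using a R0 by (intro power_mono) auto
  then have "R^4 / 4 \<le> a^2" by (simp add: power2_eq_square power4_eq_xxxx)
  then have "4 * V \<le> a^2" using VR by linarith
  moreover have "a > 0"
  proof -
    have "R^2 / 2 > 0" using R0 by simp
    then show ?thesis using a by linarith
  qed
  ultimately show ?thesis by (simp add: field_simps)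
qed



lemma pmf_unif: "j \<in> {1..k} \<Longrightarrow> pmf (unif k) j = 1 / real k"
  by (simp add: unif_def)

lemma main_unif:
  fixes k :: nat and n lam \<alpha> :: real
  assumes k2: "k \<ge> 2" and n: "n > 0" and lam: "lam > 0" and a0: "0 < \<alpha>" and a1: "\<alpha> \<le> 1"
    and p: "set_pmf p \<subseteq> {1..k}"
    and hyp: "n \<ge> 40 * (real k powr (3/4) * sqrt (mu k n lam)) / \<alpha>"
    and pu: "p = unif k"
  shows "measure_pmf.prob (protocol k n lam p) {M. Zstat k n lam M \<ge> 2 * n * \<alpha>^2} \<le> 1/3"
proof -
  obtain s where s0: "s > 0" and s1: "s \<ge> 1" and s4: "s^4 = real k"
    and H: "(n*\<alpha>)^2 \<ge> 1600 * s^6 * mu k n lam" and e: "exp (- n) \<le> 1/12"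
    and m0: "mu k n lam > 0"
    using common[OF k2 n lam a0 a1 hyp] by blast
  let ?m = "mu k n lam"
  have kpos: "real k > 0" using k2 by simp
  have L: "n * pmf p j + lam / 2 = ?m" if "j \<in> {1..k}" for j
    using that pu by (simp add: pmf_unif mu_def)
  have D: "(\<Sum>j = 1..k. (n * pmf p j + lam / 2 - ?m)^2) = 0"
    by (intro sum.neutral) (simp add: L)
  have V: "(\<Sum>j = 1..k. 2 * (n * pmf p j + lam / 2)^2 + 4 * (n * pmf p j + lam / 2 - ?m)^2 * (n * pmf p j + lam / 2))
      = 2 * real k * ?m^2"
  proof -
    have "(\<Sum>j = 1..k. 2 * (n * pmf p j + lam / 2)^2 + 4 * (n * pmf p j + lam / 2 - ?m)^2 * (n * pmf p j + lam / 2))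
        = (\<Sum>j = 1..k. 2 * ?m^2)"
      by (intro sum.cong refl) (simp add: L)
    then show ?thesis by simp
  qed
  have apos: "2 * n * \<alpha>^2 * n / real k - 0 > 0" using n a0 kpos by simp
  have "measure_pmf.prob (protocol k n lam p) {M. Zstat k n lam M \<ge> 2 * n * \<alpha>^2}
      \<le> (2 * real k * ?m^2) / (2 * n * \<alpha>^2 * n / real k)^2 + exp (- n)"
    using core(1)[where t="2 * n * \<alpha>^2", OF n lam p] k2 apos unfolding D V by simp
  also have "(2 * real k * ?m^2) / (2 * n * \<alpha>^2 * n / real k)^2 \<le> 1/4"
    by (rule unif_arith[OF s4[symmetric] s0 n a0 m0 H refl refl])
  finally show ?thesis using e by simp
qed

lemma main_far:
  fixes k :: nat and n lam \<alpha> :: real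
  assumes k2: "k \<ge> 2" and n: "n > 0" and lam: "lam > 0" and a0: "0 < \<alpha>" and a1: "\<alpha> \<le> 1"
    and p: "set_pmf p \<subseteq> {1..k}"
    and hyp: "n \<ge> 40 * (real k powr (3/4) * sqrt (mu k n lam)) / \<alpha>"
    and far: "dTV k p (unif k) > \<alpha>"
  shows "measure_pmf.prob (protocol k n lam p) {M. Zstat k n lam M \<le> 2 * n * \<alpha>^2} \<le> 1/3"
proof -
  obtain s where s0: "s > 0" and s1: "s \<ge> 1" and s4: "s^4 = real k"
    and H: "(n*\<alpha>)^2 \<ge> 1600 * s^6 * mu k n lam" and e: "exp (- n) \<le> 1/12"
    and m0: "mu k n lam > 0" and nas: "n * \<alpha> \<ge> 1600 * s^2"
    using common[OF k2 n lam a0 a1 hyp] by blast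
  let ?m = "mu k n lam"
  define \<Delta> where "\<Delta> = (\<lambda>j. pmf p j - 1 / real k)"
  define D2 where "D2 = (\<Sum>j = 1..k. (\<Delta> j)^2)"
  define R where "R = n * sqrt D2"
  have kpos: "real k > 0" using k2 by simp
  have D2nn: "D2 \<ge> 0" unfolding D2_def by (intro sum_nonneg) auto
  have R0: "R \<ge> 0" unfolding R_def using n D2nn by simp
  have Lx: "n * pmf p j + lam / 2 - ?m = n * \<Delta> j" for j
    by (simp add: \<Delta>_def mu_def algebra_simps)
  have RD: "R^2 = n^2 * D2" unfolding R_def using D2nn by (simp add: power_mult_distrib)
  have D: "(\<Sum>j = 1..k. (n * pmf p j + lam / 2 - ?m)^2) = R^2"
    unfolding Lx RD D2_def by (simp add: power_mult_distrib sum_distrib_left)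
  have SA: "(\<Sum>j = 1..k. \<bar>\<Delta> j\<bar>) > 2 * \<alpha>"
  proof -
    have "(\<Sum>j = 1..k. \<bar>pmf p j - pmf (unif k) j\<bar>) = (\<Sum>j = 1..k. \<bar>\<Delta> j\<bar>)"
      by (intro sum.cong refl) (simp add: pmf_unif \<Delta>_def)
    then show ?thesis using far unfolding dTV_def by simp
  qed
  have CS: "(\<Sum>j = 1..k. \<bar>\<Delta> j\<bar>)^2 \<le> D2 * real k"
    using sum_squared_le_sum_of_squares[of "\<lambda>j. \<bar>\<Delta> j\<bar>" "{1..k}"] unfolding D2_def by simp
  have "(2 * \<alpha>)^2 \<le> (\<Sum>j = 1..k. \<bar>\<Delta> j\<bar>)^2" using SA a0 by (intro power_mono) auto
  then have D2k: "4 * \<alpha>^2 \<le> D2 * real k" using CS by (simp add: power_mult_distrib)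
  then have D2b: "D2 \<ge> 4 * \<alpha>^2 / real k" using kpos by (simp add: field_simps)
  have R2a: "R^2 \<ge> 4 * (n*\<alpha>)^2 / real k"
  proof -
    have A: "n^2 * (4 * \<alpha>^2 / real k) \<le> n^2 * D2" using D2b by (intro mult_left_mono) auto
    have e: "n^2 * (4 * \<alpha>^2 / real k) = 4 * (n*\<alpha>)^2 / real k" by (simp add: power_mult_distrib)
    show ?thesis unfolding RD by (subst e[symmetric]) (rule A)
  qed
  have R2: "R^2 \<ge> 6400 * s^2 * ?m"
  proof -
    have "4 * (1600 * s^6 * ?m) / real k \<le> 4 * (n*\<alpha>)^2 / real k"
      using H kpos by (intro divide_right_mono) (simp_all add: mult_ac)
    moreover have "4 * (1600 * s^6 * ?m) / real k = 6400 * s^2 * ?m"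
    proof -
      have "s^6 = s^2 * s^4" by (simp flip: power_add)
      then show ?thesis unfolding s4[symmetric] using s0 by (simp add: field_simps)
    qed
    ultimately show ?thesis using R2a by linarith
  qed
  have R3200: "R \<ge> 3200"
  proof -
    have "(2 * \<alpha> / s^2)^2 = 4 * \<alpha>^2 / real k" unfolding s4[symmetric]
      by (simp add: power2_eq_square power4_eq_xxxx)
    then have "2 * \<alpha> / s^2 \<le> sqrt D2" using D2b by (intro real_le_rsqrt) simp
    then have "n * (2 * \<alpha> / s^2) \<le> R" unfolding R_def using n by (intro mult_left_mono) auto
    moreover have "n * (2 * \<alpha> / s^2) \<ge> 3200"
    proof -
      have "n * (2 * \<alpha> / s^2) = 2 * (n * \<alpha>) / s^2" by simp
      also have "\<dots> \<ge> 2 * (1600 * s^2) / s^2" using nas s0 by (intro divide_right_mono) (simp_all add: mult_ac)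
      also have "2 * (1600 * s^2) / s^2 = 3200" using s0 by simp
      finally show ?thesis .
    qed
    ultimately show ?thesis by linarith
  qed
  have xR: "\<bar>n * \<Delta> j\<bar> \<le> R" if "j \<in> {1..k}" for j
  proof -
    have "(n * \<Delta> j)^2 \<le> (\<Sum>i = 1..k. (n * \<Delta> i)^2)"
      using that by (intro member_le_sum) auto
    also have "\<dots> = R^2" unfolding RD D2_def by (simp add: power_mult_distrib sum_distrib_left)
    finally have "\<bar>n * \<Delta> j\<bar>^2 \<le> R^2" by simp
    then show ?thesis by (rule power2_le_imp_le[OF _ R0])
  qed
  have Vb: "(\<Sum>j = 1..k. 2 * (n * pmf p j + lam / 2)^2 + 4 * (n * pmf p j + lam / 2 - ?m)^2 * (n * pmf p j + lam / 2))
      \<le> 4 * real k * ?m^2 + 4 * R^2 + 4 * ?m * R^2 + 4 * R^3"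
  proof -
    have "(\<Sum>j = 1..k. 2 * (n * pmf p j + lam / 2)^2 + 4 * (n * pmf p j + lam / 2 - ?m)^2 * (n * pmf p j + lam / 2))
       \<le> (\<Sum>j = 1..k. 4 * ?m^2 + (4 + 4 * ?m + 4 * R) * (n * \<Delta> j)^2)"
    proof (rule sum_mono)
      fix j assume j: "j \<in> {1..k}"
      define x where "x = n * \<Delta> j"
      have Lj: "n * pmf p j + lam / 2 = ?m + x" using Lx[of j] unfolding x_def by simp
      have xR': "x \<le> R" using xR[OF j] unfolding x_def by simp
      have i1: "2 * (?m + x)^2 \<le> 4 * ?m^2 + 4 * x^2"
      proof -
        have "0 \<le> (?m - x)^2" by simp
        then show ?thesis by (simp add: power2_eq_square algebra_simps)
      qed
      have i2: "x^2 * x \<le> x^2 * R" using xR' by (intro mult_left_mono) auto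
      show "2 * (n * pmf p j + lam / 2)^2 + 4 * (n * pmf p j + lam / 2 - ?m)^2 * (n * pmf p j + lam / 2)
          \<le> 4 * ?m^2 + (4 + 4 * ?m + 4 * R) * (n * \<Delta> j)^2"
        unfolding Lj x_def[symmetric] using i1 i2 by (simp add: algebra_simps)
    qed
    also have "\<dots> = 4 * real k * ?m^2 + (4 + 4 * ?m + 4 * R) * R^2"
      unfolding RD D2_def by (simp add: sum.distrib sum_distrib_left power_mult_distrib)
    also have "\<dots> = 4 * real k * ?m^2 + 4 * R^2 + 4 * ?m * R^2 + 4 * R^3"
      by (simp add: power2_eq_square power3_eq_cube algebra_simps)
    finally show ?thesis .
  qed
  define a where "a = R^2 - 2 * n * \<alpha>^2 * n / real k"
  have aR: "a \<ge> R^2 / 2"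
  proof -
    have t: "2 * n * \<alpha>^2 * n / real k = (4 * (n*\<alpha>)^2 / real k) / 2" by (simp add: power2_eq_square)
    have g: "\<And>X Y :: real. X \<le> Y \<Longrightarrow> Y / 2 \<le> Y - X / 2" by simp
    show ?thesis unfolding a_def t by (rule g[OF R2a])
  qed
  have apos: "a > 0"
  proof -
    have "R^2 > 0" using R3200 by simp
    then show ?thesis using aR by linarith
  qed
  have "measure_pmf.prob (protocol k n lam p) {M. Zstat k n lam M \<le> 2 * n * \<alpha>^2}
      \<le> (\<Sum>j = 1..k. 2 * (n * pmf p j + lam / 2)^2 + 4 * (n * pmf p j + lam / 2 - ?m)^2 * (n * pmf p j + lam / 2)) / a^2 + exp (- n)"
    using core(2)[where t="2 * n * \<alpha>^2", OF n lam p] k2 apos unfolding D a_def by simp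
  also have "(\<Sum>j = 1..k. 2 * (n * pmf p j + lam / 2)^2 + 4 * (n * pmf p j + lam / 2 - ?m)^2 * (n * pmf p j + lam / 2)) / a^2 \<le> 1/4"
    by (rule far_arith[OF s4[symmetric] s1 m0 R3200 R2 Vb aR])
  finally show ?thesis using e by simp
qed


theorem lemma3p6:
  "\<exists>C::real. C > 0 \<and>
    (\<forall>(k::nat) (n::real) (lam::real) (\<alpha>::real) (p::nat pmf).
       k \<ge> 2 \<longrightarrow> n > 0 \<longrightarrow> lam > 0 \<longrightarrow> 0 < \<alpha> \<longrightarrow> \<alpha> \<le> 1 \<longrightarrow>
       set_pmf p \<subseteq> {1..k} \<longrightarrow>
       n \<ge> C * (real k powr (3/4) * sqrt (mu k n lam)) / \<alpha> \<longrightarrow>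
       (p = unif k \<longrightarrow>
          measure_pmf.prob (protocol k n lam p) {M. Zstat k n lam M \<ge> 2 * n * \<alpha>^2} \<le> 1/3) \<and>
       (dTV k p (unif k) > \<alpha> \<longrightarrow>
          measure_pmf.prob (protocol k n lam p) {M. Zstat k n lam M \<le> 2 * n * \<alpha>^2} \<le> 1/3))"
  apply (rule exI[where x=40])
  apply (intro conjI allI impI)
    apply simp
   apply (rule main_unif; assumption)
  apply (rule main_far; assumption)
  done

end
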